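(* Let $\mathcal{R}=(G_0,e\to R)$ be an expanding replacement system with limit space $X$. Then the set of all rearrangements of $X$ is a group under composition.
   Context: A graph means a finite directed multigraph (loops and multiple edges allowed). A replacement system $\mathcal{R}=(G_0,e\to R)$ consists of a graph $G_0$ (the base graph) and a replacement rule $e\to R$, where $e$ is a single non-loop directed edge from a vertex $v$ to a vertex $w$, and $R$ is a graph containing $v$ and $w$ (the initial and terminal vertices of $R$; the other vertices of $R$ are interior). Replacing an edge $\varepsilon$ of a graph $G$ means deleting $\varepsilon$ and gluing in a copy of $R$, identifying the initial (resp. terminal) vertex of $R$ with the initial (resp. terminal) vertex of $\varepsilon$; the new edges are named $\varepsilon\zeta$ for edges $\zeta$ of $R$. The full expansion sequence is $G_0,G_1,\dots$, where $G_n$ is obtained from $G_{n-1}$ by replacing every edge; thus the edges of $G_n$ are the words $\varepsilon_0\varepsilon_1\cdots\varepsilon_n$ with $\varepsilon_0$ an edge of $G_0$ and $\varepsilon_i$ edges of $R$. $\mathcal{R}$ is expanding if (i) neither $G_0$ nor $R$ has isolated vertices, (ii) the initial and terminal vertices of $R$ are not joined by an edge, (iii) $R$ has at least three vertices and two edges. The symbol space is $\Omega=E(G_0)\times E(R)^{\mathbb{N}}$ with the product topology; two sequences $\varepsilon_0\varepsilon_1\cdots$ and $\varepsilon_0'\varepsilon_1'\cdots$ are glued if for every $n$ the edges $\varepsilon_0\cdots\varepsilon_n$ and $\varepsilon_0'\cdots\varepsilon_n'$ of $G_n$ share at least one vertex; for expanding systems this is an equivalence relation $\sim$ and the limit space is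 $X=\Omega/\sim$. For an edge $e'=\varepsilon_0\cdots\varepsilon_n$ of $G_n$, the cell $C(e')$ is the image in $X$ of the set of sequences with prefix $e'$; its boundary points are the images of the endpoints of $e'$ (a vertex $u$ of some $G_n$ corresponds to the point of $X$ that is the image of any sequence $\varepsilon_0\varepsilon_1\cdots$ such that $\varepsilon_0\cdots\varepsilon_k$ is incident on $u$ for all large $k$), and its interior is the cell minus its boundary points. If $e',e''$ are both loops or both non-loops, the canonical homeomorphism $C(e')\to C(e'')$ is the map induced by $e'\zeta_1\zeta_2\cdots\mapsto e''\zeta_1\zeta_2\cdots$. A cellular partition of $X$ is a cover of $X$ by finitely many cells with pairwise disjoint interiors. A rearrangement of $X$ is a homeomorphism $f\colon X\to X$ such that for some cellular partition $\mathcal{P}$, $f$ restricts to a canonical homeomorphism on each cell of $\mathcal{P}$. *)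

theory Defs
  imports "HOL-Analysis.Analysis" "HOL-Algebra.Group" "Graph_Theory.Digraph"
begin

text \<open>A replacement system is given by a base graph G0 (vertices 'a, arcs 'b),
  a replacement graph R (vertices 'c, arcs 'd) and its initial vertex v and
  terminal vertex w (the endpoints of the replaced non-loop edge e).\<close>

definition repl_sys :: "('a,'b) pre_digraph \<Rightarrow> ('c,'d) pre_digraph \<Rightarrow> 'c \<Rightarrow> 'c \<Rightarrow> bool" where
  "repl_sys G0 R v w \<longleftrightarrow> fin_digraph G0 \<and> fin_digraph R \<and> v \<in> verts R \<and> w \<in> verts R \<and> v \<noteq> w"

definition no_isolated :: "('x,'y) pre_digraph \<Rightarrow> bool" where
  "no_isolated G \<longleftrightarrow> (\<forall>u\<in>verts G. \<exists>a\<in>arcs G. tail G a = u \<or> head G a = u)"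

definition expanding :: "('a,'b) pre_digraph \<Rightarrow> ('c,'d) pre_digraph \<Rightarrow> 'c \<Rightarrow> 'c \<Rightarrow> bool" where
  "expanding G0 R v w \<longleftrightarrow> repl_sys G0 R v w \<and> no_isolated G0 \<and> no_isolated R \<and>
     \<not> (\<exists>a\<in>arcs R. (tail R a = v \<and> head R a = w) \<or> (tail R a = w \<and> head R a = v)) \<and>
     card (verts R) \<ge> 3 \<and> card (arcs R) \<ge> 2"

text \<open>An edge of G_n is a word (b, [d_1,...,d_n]) with b an arc of G0 and d_i arcs of R.
  A vertex of some G_n is either Inl a for a vertex a of G0, or Inr (x, c) where
  c is an interior vertex of R glued in when replacing the edge x.\<close>

type_synonym ('b,'d) eword = "'b \<times> 'd list"
type_synonym ('a,'b,'c,'d) evert = "'a + ('b,'d) eword \<times> 'c"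

definition edge_word :: "('a,'b) pre_digraph \<Rightarrow> ('c,'d) pre_digraph \<Rightarrow> nat \<Rightarrow> ('b,'d) eword \<Rightarrow> bool" where
  "edge_word G0 R n x \<longleftrightarrow> fst x \<in> arcs G0 \<and> length (snd x) = n \<and> set (snd x) \<subseteq> arcs R"

fun ends_rev :: "('a,'b) pre_digraph \<Rightarrow> ('c,'d) pre_digraph \<Rightarrow> 'c \<Rightarrow> 'c \<Rightarrow> 'b \<Rightarrow> 'd list
     \<Rightarrow> ('a,'b,'c,'d) evert \<times> ('a,'b,'c,'d) evert" where
  "ends_rev G0 R v w b [] = (Inl (tail G0 b), Inl (head G0 b))"
| "ends_rev G0 R v w b (z # rds) =
     (let (s, t) = ends_rev G0 R v w b rds;
          conv = (\<lambda>c. if c = v then s else if c = w then t else Inr ((b, rev rds), c))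
      in (conv (tail R z), conv (head R z)))"

definition ends :: "('a,'b) pre_digraph \<Rightarrow> ('c,'d) pre_digraph \<Rightarrow> 'c \<Rightarrow> 'c \<Rightarrow> ('b,'d) eword
     \<Rightarrow> ('a,'b,'c,'d) evert \<times> ('a,'b,'c,'d) evert" where
  "ends G0 R v w x = ends_rev G0 R v w (fst x) (rev (snd x))"

definition incident :: "('a,'b) pre_digraph \<Rightarrow> ('c,'d) pre_digraph \<Rightarrow> 'c \<Rightarrow> 'c \<Rightarrow> ('b,'d) eword
     \<Rightarrow> ('a,'b,'c,'d) evert \<Rightarrow> bool" where
  "incident G0 R v w x u \<longleftrightarrow> u = fst (ends G0 R v w x) \<or> u = snd (ends G0 R v w x)"

definition is_loop_word :: "('a,'b) pre_digraph \<Rightarrow> ('c,'d) pre_digraph \<Rightarrow> 'c \<Rightarrow> 'c \<Rightarrow> ('b,'d) eword \<Rightarrow> bool" where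
  "is_loop_word G0 R v w x \<longleftrightarrow> fst (ends G0 R v w x) = snd (ends G0 R v w x)"

definition symbol_top :: "('a,'b) pre_digraph \<Rightarrow> ('c,'d) pre_digraph \<Rightarrow> ('b \<times> (nat \<Rightarrow> 'd)) topology" where
  "symbol_top G0 R = prod_topology (discrete_topology (arcs G0))
                        (product_topology (\<lambda>_. discrete_topology (arcs R)) UNIV)"

definition prefix_word :: "nat \<Rightarrow> 'b \<times> (nat \<Rightarrow> 'd) \<Rightarrow> ('b,'d) eword" where
  "prefix_word n s = (fst s, map (snd s) [0..<n])"

definition glue_rel :: "('a,'b) pre_digraph \<Rightarrow> ('c,'d) pre_digraph \<Rightarrow> 'c \<Rightarrow> 'c
     \<Rightarrow> (('b \<times> (nat \<Rightarrow> 'd)) \<times> ('b \<times> (nat \<Rightarrow> 'd))) set" where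
  "glue_rel G0 R v w = {(s, t). s \<in> topspace (symbol_top G0 R) \<and> t \<in> topspace (symbol_top G0 R) \<and>
      (\<forall>n. \<exists>u. incident G0 R v w (prefix_word n s) u \<and> incident G0 R v w (prefix_word n t) u)}"

definition quotient_top :: "'x topology \<Rightarrow> ('x \<times> 'x) set \<Rightarrow> 'x set topology" where
  "quotient_top T r = topology (\<lambda>U. U \<subseteq> topspace T // r \<and>
        openin T {x \<in> topspace T. r `` {x} \<in> U})"

lemma istopology_quotient:
  "istopology (\<lambda>U. U \<subseteq> topspace T // r \<and> openin T {x \<in> topspace T. r `` {x} \<in> U})"
proof -
  have i: "{x \<in> topspace T. r `` {x} \<in> S \<inter> U} =
      {x \<in> topspace T. r `` {x} \<in> S} \<inter> {x \<in> topspace T. r `` {x} \<in> U}" for S U by auto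
  have u: "{x \<in> topspace T. r `` {x} \<in> \<Union>K} = (\<Union>U\<in>K. {x \<in> topspace T. r `` {x} \<in> U})" for K by auto
  have A: "openin T {x \<in> topspace T. r `` {x} \<in> S \<inter> U}"
    if "openin T {x \<in> topspace T. r `` {x} \<in> S}" "openin T {x \<in> topspace T. r `` {x} \<in> U}" for S U
    unfolding i using that by (rule openin_Int)
  have B: "openin T {x \<in> topspace T. r `` {x} \<in> \<Union>K}"
    if "\<forall>U\<in>K. openin T {x \<in> topspace T. r `` {x} \<in> U}" for K
    unfolding u using that by (intro openin_Union) auto
  show ?thesis unfolding istopology_def
    using A B by (intro conjI allI impI; blast)
qed

definition limit_top :: "('a,'b) pre_digraph \<Rightarrow> ('c,'d) pre_digraph \<Rightarrow> 'c \<Rightarrow> 'c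
     \<Rightarrow> ('b \<times> (nat \<Rightarrow> 'd)) set topology" where
  "limit_top G0 R v w = quotient_top (symbol_top G0 R) (glue_rel G0 R v w)"

definition limit_space :: "('a,'b) pre_digraph \<Rightarrow> ('c,'d) pre_digraph \<Rightarrow> 'c \<Rightarrow> 'c
     \<Rightarrow> ('b \<times> (nat \<Rightarrow> 'd)) set set" where
  "limit_space G0 R v w = topspace (symbol_top G0 R) // glue_rel G0 R v w"

definition qmap :: "('a,'b) pre_digraph \<Rightarrow> ('c,'d) pre_digraph \<Rightarrow> 'c \<Rightarrow> 'c
     \<Rightarrow> 'b \<times> (nat \<Rightarrow> 'd) \<Rightarrow> ('b \<times> (nat \<Rightarrow> 'd)) set" where
  "qmap G0 R v w s = glue_rel G0 R v w `` {s}"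

definition cylinder :: "('a,'b) pre_digraph \<Rightarrow> ('c,'d) pre_digraph \<Rightarrow> ('b,'d) eword
     \<Rightarrow> ('b \<times> (nat \<Rightarrow> 'd)) set" where
  "cylinder G0 R x = {s \<in> topspace (symbol_top G0 R). prefix_word (length (snd x)) s = x}"

definition cell :: "('a,'b) pre_digraph \<Rightarrow> ('c,'d) pre_digraph \<Rightarrow> 'c \<Rightarrow> 'c \<Rightarrow> ('b,'d) eword
     \<Rightarrow> ('b \<times> (nat \<Rightarrow> 'd)) set set" where
  "cell G0 R v w x = qmap G0 R v w ` cylinder G0 R x"

text \<open>The point of X corresponding to a vertex u of some G_n.\<close>
definition vertex_point :: "('a,'b) pre_digraph \<Rightarrow> ('c,'d) pre_digraph \<Rightarrow> 'c \<Rightarrow> 'c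
     \<Rightarrow> ('a,'b,'c,'d) evert \<Rightarrow> ('b \<times> (nat \<Rightarrow> 'd)) set set" where
  "vertex_point G0 R v w u = {qmap G0 R v w s | s. s \<in> topspace (symbol_top G0 R) \<and>
        eventually (\<lambda>k. incident G0 R v w (prefix_word k s) u) sequentially}"

definition cell_boundary :: "('a,'b) pre_digraph \<Rightarrow> ('c,'d) pre_digraph \<Rightarrow> 'c \<Rightarrow> 'c \<Rightarrow> ('b,'d) eword
     \<Rightarrow> ('b \<times> (nat \<Rightarrow> 'd)) set set" where
  "cell_boundary G0 R v w x = vertex_point G0 R v w (fst (ends G0 R v w x)) \<union>
                              vertex_point G0 R v w (snd (ends G0 R v w x))"

definition cell_interior :: "('a,'b) pre_digraph \<Rightarrow> ('c,'d) pre_digraph \<Rightarrow> 'c \<Rightarrow> 'c \<Rightarrow> ('b,'d) eword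
     \<Rightarrow> ('b \<times> (nat \<Rightarrow> 'd)) set set" where
  "cell_interior G0 R v w x = cell G0 R v w x - cell_boundary G0 R v w x"

text \<open>A cellular partition, given by the finite set of edges (of various G_n) whose cells form it.\<close>
definition cellular_partition :: "('a,'b) pre_digraph \<Rightarrow> ('c,'d) pre_digraph \<Rightarrow> 'c \<Rightarrow> 'c
     \<Rightarrow> ('b,'d) eword set \<Rightarrow> bool" where
  "cellular_partition G0 R v w P \<longleftrightarrow> finite P \<and>
     (\<forall>x\<in>P. \<exists>n. edge_word G0 R n x) \<and>
     (\<Union>x\<in>P. cell G0 R v w x) = limit_space G0 R v w \<and>
     (\<forall>x\<in>P. \<forall>y\<in>P. cell G0 R v w x \<noteq> cell G0 R v w y \<longrightarrow>
         cell_interior G0 R v w x \<inter> cell_interior G0 R v w y = {})"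

text \<open>Replace the prefix x of a sequence s by y: x zeta_1 zeta_2 ... maps to y zeta_1 zeta_2 ...\<close>
definition graft :: "('b,'d) eword \<Rightarrow> ('b,'d) eword \<Rightarrow> 'b \<times> (nat \<Rightarrow> 'd) \<Rightarrow> 'b \<times> (nat \<Rightarrow> 'd)" where
  "graft x y s = (fst y, \<lambda>i. if i < length (snd y) then snd y ! i
                             else snd s (i - length (snd y) + length (snd x)))"

text \<open>Rearrangements; as maps X \<rightarrow> X they are normalised to be extensional on X.\<close>
definition rearrangement :: "('a,'b) pre_digraph \<Rightarrow> ('c,'d) pre_digraph \<Rightarrow> 'c \<Rightarrow> 'c
     \<Rightarrow> (('b \<times> (nat \<Rightarrow> 'd)) set \<Rightarrow> ('b \<times> (nat \<Rightarrow> 'd)) set) \<Rightarrow> bool" where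
  "rearrangement G0 R v w f \<longleftrightarrow>
     f \<in> extensional (limit_space G0 R v w) \<and>
     homeomorphic_map (limit_top G0 R v w) (limit_top G0 R v w) f \<and>
     (\<exists>P. cellular_partition G0 R v w P \<and>
        (\<forall>x\<in>P. \<exists>y. (\<exists>m. edge_word G0 R m y) \<and>
              (is_loop_word G0 R v w x \<longleftrightarrow> is_loop_word G0 R v w y) \<and>
              (\<forall>s\<in>cylinder G0 R x. f (qmap G0 R v w s) = qmap G0 R v w (graft x y s))))"

definition rearrangements :: "('a,'b) pre_digraph \<Rightarrow> ('c,'d) pre_digraph \<Rightarrow> 'c \<Rightarrow> 'c
     \<Rightarrow> (('b \<times> (nat \<Rightarrow> 'd)) set \<Rightarrow> ('b \<times> (nat \<Rightarrow> 'd)) set) set" where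
  "rearrangements G0 R v w = {f. rearrangement G0 R v w f}"

end

theory Submission
  imports Defs
begin

definition endset :: "('a,'b) pre_digraph \<Rightarrow> ('c,'d) pre_digraph \<Rightarrow> 'c \<Rightarrow> 'c \<Rightarrow> ('b,'d) eword
     \<Rightarrow> ('a,'b,'c,'d) evert set" where
  "endset G0 R v w x = {fst (ends G0 R v w x), snd (ends G0 R v w x)}"

lemma incident_endset: "incident G0 R v w x u \<longleftrightarrow> u \<in> endset G0 R v w x"
  by (auto simp: incident_def endset_def)

lemma ends_snoc: "ends G0 R v w (b, l @ [z]) =
  (let cv = (\<lambda>c. if c = v then fst (ends G0 R v w (b,l)) else if c = w then snd (ends G0 R v w (b,l))
             else Inr ((b,l),c)) in (cv (tail R z), cv (head R z)))"
  by (simp add: ends_def split: prod.split)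

lemma endset_snoc: "u \<in> endset G0 R v w (b, l @ [z]) \<Longrightarrow>
   u \<in> endset G0 R v w (b,l) \<or> (\<exists>c. u = Inr ((b,l),c))"
  by (auto simp: endset_def ends_snoc Let_def split: if_splits)

lemma endset_desc: "u \<in> endset G0 R v w (b, l @ m) \<Longrightarrow>
   u \<in> endset G0 R v w (b,l) \<or> (\<exists>m1 m2 c. m = m1 @ m2 \<and> m2 \<noteq> [] \<and> u = Inr ((b, l@m1), c))"
proof (induction m arbitrary: u rule: rev_induct)
  case Nil then show ?case by simp
next
  case (snoc z m)
  from endset_snoc[of u G0 R v w b "l@m" z] snoc.prems
  have "u \<in> endset G0 R v w (b, l@m) \<or> (\<exists>c. u = Inr ((b,l@m),c))" by simp
  then show ?case
  proof
    assume "u \<in> endset G0 R v w (b, l@m)"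
    from snoc.IH[OF this] show ?thesis by (metis append.assoc snoc_eq_iff_butlast)
  next
    assume "\<exists>c. u = Inr ((b,l@m),c)"
    then show ?thesis by blast
  qed
qed

lemma endset_base: "u \<in> endset G0 R v w (b, l) \<Longrightarrow>
   (\<exists>a. u = Inl a) \<or> (\<exists>m1 m2 c. l = m1 @ m2 \<and> m2 \<noteq> [] \<and> u = Inr ((b, m1), c))"
  using endset_desc[of u G0 R v w b "[]" l]
  by (auto simp: endset_def ends_def)

lemma endset_old: "u \<in> endset G0 R v w (b, l) \<Longrightarrow> u = Inr ((b',l'),c) \<Longrightarrow> length l' < length l"
  by (drule endset_base) auto

definition pre :: "('b,'d) eword \<Rightarrow> ('b,'d) eword \<Rightarrow> bool" where
  "pre x y \<longleftrightarrow> fst x = fst y \<and> (\<exists>m. snd y = snd x @ m)"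

lemma incomparable_common:
  assumes "\<not> pre x x'" "\<not> pre x' x"
    and "u \<in> endset G0 R v w (fst x, snd x @ m)" "u \<in> endset G0 R v w (fst x', snd x' @ m')"
  shows "u \<in> endset G0 R v w x"
proof -
  obtain b l where x: "x = (b,l)" by force
  obtain b' l' where x': "x' = (b',l')" by force
  from endset_desc[of u G0 R v w b l m] assms(3) x
  have "u \<in> endset G0 R v w (b,l) \<or> (\<exists>m1 m2 c. m = m1 @ m2 \<and> m2 \<noteq> [] \<and> u = Inr ((b, l@m1), c))" by simp
  then show ?thesis
  proof
    assume "u \<in> endset G0 R v w (b,l)" then show ?thesis using x by simp
  next
    assume "\<exists>m1 m2 c. m = m1 @ m2 \<and> m2 \<noteq> [] \<and> u = Inr ((b, l@m1), c)"
    then obtain m1 c where u: "u = Inr ((b, l@m1), c)" by blast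
    from endset_desc[of u G0 R v w b' l' m'] assms(4) x'
    have "u \<in> endset G0 R v w (b',l') \<or> (\<exists>m1 m2 c. m' = m1 @ m2 \<and> m2 \<noteq> [] \<and> u = Inr ((b', l'@m1), c))" by simp
    then show ?thesis
    proof
      assume a: "u \<in> endset G0 R v w (b',l')"
      have "pre x x'" using endset_base[OF a] u x x' by (auto simp: pre_def)
      then show ?thesis using assms(1) by simp
    next
      assume "\<exists>m1 m2 c. m' = m1 @ m2 \<and> m2 \<noteq> [] \<and> u = Inr ((b', l'@m1), c)"
      then obtain m1' where "b = b'" "l @ m1 = l' @ m1'" using u by auto
      then have "pre x x' \<or> pre x' x" using x x' by (auto simp: pre_def append_eq_append_conv2)
      then show ?thesis using assms(1,2) by blast
    qed
  qed
qed

lemma topspace_symbol: "topspace (symbol_top G0 R) = {s. fst s \<in> arcs G0 \<and> (\<forall>i. snd s i \<in> arcs R)}"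
  unfolding symbol_top_def by (auto simp: PiE_iff)

lemma prefix_len[simp]: "length (snd (prefix_word n s)) = n"
  by (simp add: prefix_word_def)

lemma prefix_fst[simp]: "fst (prefix_word n s) = fst s"
  by (simp add: prefix_word_def)

lemma prefix_surj[simp]: "(fst s, snd (prefix_word n s)) = prefix_word n s"
  by (simp add: prefix_word_def)

lemma prefix_Suc: "prefix_word (Suc n) s = (fst s, snd (prefix_word n s) @ [snd s n])"
  by (simp add: prefix_word_def)

lemma prefix_add: "prefix_word (n + k) s = (fst s, snd (prefix_word n s) @ map (snd s) [n..<n+k])"
  by (simp add: prefix_word_def upt_add_eq_append[of 0 n k])

lemma prefix_eq_iff: "prefix_word (length (snd x)) s = x \<longleftrightarrow>
    fst s = fst x \<and> (\<forall>j<length (snd x). snd s j = snd x ! j)"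
proof (cases x)
  case (Pair b l)
  have "map (snd s) [0..<length l] = l \<longleftrightarrow> (\<forall>j<length l. snd s j = l!j)"
  proof
    assume h: "map (snd s) [0..<length l] = l"
    show "\<forall>j<length l. snd s j = l!j"
    proof (intro allI impI)
      fix j assume j: "j < length l"
      have "map (snd s) [0..<length l] ! j = snd s j" using j by simp
      then show "snd s j = l ! j" using h by simp
    qed
  next
    assume h: "\<forall>j<length l. snd s j = l!j"
    show "map (snd s) [0..<length l] = l" by (rule nth_equalityI) (simp_all add: h)
  qed
  then show ?thesis by (simp add: prefix_word_def Pair)
qed

lemma cylinder_iff: "s \<in> cylinder G0 R x \<longleftrightarrow> s \<in> topspace (symbol_top G0 R) \<and>
    fst s = fst x \<and> (\<forall>j<length (snd x). snd s j = snd x ! j)"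
  unfolding cylinder_def using prefix_eq_iff by blast

definition oldv :: "nat \<Rightarrow> ('a,'b,'c,'d) evert \<Rightarrow> bool" where
  "oldv N a \<longleftrightarrow> (\<forall>b l c. a = Inr ((b,l),c) \<longrightarrow> length l < N)"

lemma endset_oldv: "a \<in> endset G0 R v w x \<Longrightarrow> oldv (length (snd x)) a"
  by (cases x) (auto simp: oldv_def dest: endset_old)

lemma dc_step: "oldv N a \<Longrightarrow> N \<le> n \<Longrightarrow> incident G0 R v w (prefix_word (Suc n) s) a
   \<Longrightarrow> incident G0 R v w (prefix_word n s) a"
proof -
  assume h: "oldv N a" "N \<le> n" "incident G0 R v w (prefix_word (Suc n) s) a"
  have "a \<in> endset G0 R v w (fst s, snd (prefix_word n s)) \<or> (\<exists>c. a = Inr ((fst s, snd (prefix_word n s)),c))"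
    using endset_snoc[of a G0 R v w "fst s" "snd (prefix_word n s)" "snd s n"] h(3)
    by (simp add: incident_endset prefix_Suc del: prefix_surj)
  moreover have "\<not> (\<exists>c. a = Inr ((fst s, snd (prefix_word n s)),c))"
    using h(1,2) unfolding oldv_def by (metis prefix_len not_le)
  ultimately show ?thesis by (simp add: incident_endset)
qed

lemma dc: assumes "oldv N a" "N \<le> k" "\<not> incident G0 R v w (prefix_word k s) a" "k \<le> n"
  shows "\<not> incident G0 R v w (prefix_word n s) a"
  using assms(4)
proof (induction n rule: dec_induct)
  case base then show ?case using assms(3) .
next
  case (step m) then show ?case using dc_step[OF assms(1), of m G0 R v w s] assms(2) by auto
qed

lemma prefix_extend: "prefix_word (length (snd x)) s = x \<Longrightarrow> length (snd x) \<le> n \<Longrightarrow>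
   prefix_word n s = (fst x, snd x @ map (snd s) [length (snd x)..<n])"
proof -
  assume a: "prefix_word (length (snd x)) s = x" "length (snd x) \<le> n"
  have "fst s = fst x" using prefix_fst[of "length (snd x)" s] a(1) by simp
  then show ?thesis using prefix_add[of "length (snd x)" "n - length (snd x)" s] a by simp
qed

lemma glue_lemma:
  assumes "prefix_word (length (snd x)) s = x" "prefix_word (length (snd x')) t = x'"
    "\<not> pre x x'" "\<not> pre x' x"
    "\<forall>n. \<exists>u. incident G0 R v w (prefix_word n s) u \<and> incident G0 R v w (prefix_word n t) u"
  shows "\<exists>a\<in>endset G0 R v w x. eventually (\<lambda>n. incident G0 R v w (prefix_word n s) a) sequentially"
proof -
  define K where "K = max (length (snd x)) (length (snd x'))"
  define a1 where "a1 = fst (ends G0 R v w x)"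
  define a2 where "a2 = snd (ends G0 R v w x)"
  have H: "incident G0 R v w (prefix_word n s) a1 \<or> incident G0 R v w (prefix_word n s) a2"
    if "K \<le> n" for n
  proof -
    obtain u where u: "incident G0 R v w (prefix_word n s) u" "incident G0 R v w (prefix_word n t) u"
      using assms(5) by blast
    have e1: "prefix_word n s = (fst x, snd x @ map (snd s) [length (snd x)..<n])"
      using prefix_extend[OF assms(1), of n] that by (simp add: K_def)
    have e2: "prefix_word n t = (fst x', snd x' @ map (snd t) [length (snd x')..<n])"
      using prefix_extend[OF assms(2), of n] that by (simp add: K_def)
    have "u \<in> endset G0 R v w x"
      by (rule incomparable_common[OF assms(3,4), where m="map (snd s) [length (snd x)..<n]"
            and m'="map (snd t) [length (snd x')..<n]"])
         (use u e1 e2 in \<open>simp_all add: incident_endset\<close>)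
    then show ?thesis using u by (auto simp: endset_def a1_def a2_def incident_endset)
  qed
  have o1: "oldv (length (snd x)) a1" "oldv (length (snd x)) a2"
    using endset_oldv[of a1 G0 R v w x] endset_oldv[of a2 G0 R v w x]
    by (simp_all add: a1_def a2_def endset_def)
  show ?thesis
  proof (cases "\<forall>n\<ge>K. incident G0 R v w (prefix_word n s) a1")
    case True
    then show ?thesis by (auto simp: a1_def endset_def eventually_sequentially)
  next
    case False
    then obtain k where k: "K \<le> k" "\<not> incident G0 R v w (prefix_word k s) a1" by auto
    have "\<forall>n\<ge>k. incident G0 R v w (prefix_word n s) a2"
    proof (intro allI impI)
      fix n assume n: "k \<le> n"
      have "\<not> incident G0 R v w (prefix_word n s) a1"
        using dc[OF o1(1) _ k(2) n] k(1) by (simp add: K_def)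
      then show "incident G0 R v w (prefix_word n s) a2" using H[of n] n k(1) by simp
    qed
    then show ?thesis by (auto simp: a2_def endset_def eventually_sequentially)
  qed
qed

lemma Inr_not_endset: "Inr ((b,l),d) \<notin> endset G0 R v w (b,l)"
  using endset_old[of "Inr ((b,l),d)" G0 R v w b l b l d] by auto

lemma endset_snoc_disj:
  assumes "v \<noteq> w"
    and "v \<in> {tail R z, head R z} \<Longrightarrow> fst (ends G0 R v w (b,l)) \<notin> E"
    and "w \<in> {tail R z, head R z} \<Longrightarrow> snd (ends G0 R v w (b,l)) \<notin> E"
    and "\<And>d. d \<in> {tail R z, head R z} \<Longrightarrow> d \<noteq> v \<Longrightarrow> d \<noteq> w \<Longrightarrow> Inr ((b,l),d) \<notin> E"
  shows "endset G0 R v w (b, l @ [z]) \<inter> E = {}"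
  using assms unfolding endset_def ends_snoc Let_def by auto

lemma escape:
  assumes exp: "expanding G0 R v w"
  shows "\<exists>u. set u \<subseteq> arcs R \<and> endset G0 R v w (b, l @ u) \<inter> endset G0 R v w (b,l) = {}"
proof -
  have rs: "repl_sys G0 R v w" and ni: "no_isolated R"
    and nvw: "\<not> (\<exists>a\<in>arcs R. (tail R a = v \<and> head R a = w) \<or> (tail R a = w \<and> head R a = v))"
    and c3: "card (verts R) \<ge> 3"
    using exp by (auto simp: expanding_def)
  have vw: "v \<in> verts R" "w \<in> verts R" "v \<noteq> w" using rs by (auto simp: repl_sys_def)
  obtain c where c: "c \<in> verts R" "c \<noteq> v" "c \<noteq> w"
  proof (rule ccontr)
    assume "\<not> thesis"
    with that have "verts R \<subseteq> {v,w}" by blast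
    then have "card (verts R) \<le> card {v,w}" by (intro card_mono) auto
    also have "\<dots> \<le> 2" by (simp add: card_insert_if)
    finally show False using c3 by simp
  qed
  obtain z1 where z1: "z1 \<in> arcs R" "tail R z1 = c \<or> head R z1 = c"
    using ni c(1) unfolding no_isolated_def by blast
  obtain zv where zv: "zv \<in> arcs R" "tail R zv \<noteq> w" "head R zv \<noteq> w"
  proof -
    obtain a where "a \<in> arcs R" "tail R a = v \<or> head R a = v"
      using ni vw(1) unfolding no_isolated_def by blast
    then show ?thesis using that nvw vw(3) by metis
  qed
  obtain zw where zw: "zw \<in> arcs R" "tail R zw \<noteq> v" "head R zw \<noteq> v"
  proof -
    obtain a where "a \<in> arcs R" "tail R a = w \<or> head R a = w"
      using ni vw(2) unfolding no_isolated_def by blast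
    then show ?thesis using that nvw vw(3) by metis
  qed
  define E where "E = endset G0 R v w (b,l)"
  define l1 where "l1 = l @ [z1]"
  have E1: "Inr ((b,l),d) \<notin> E" for d unfolding E_def by (rule Inr_not_endset)
  have E2: "Inr ((b,l1),d) \<notin> E" for d
  proof
    assume "Inr ((b,l1),d) \<in> E"
    from endset_old[OF this[unfolded E_def] refl] show False by (simp add: l1_def)
  qed
  have p1q1: "fst (ends G0 R v w (b,l1)) \<notin> E \<or> snd (ends G0 R v w (b,l1)) \<notin> E"
    using z1(2) c E1 unfolding l1_def ends_snoc Let_def by auto
  then show ?thesis
  proof
    assume p1: "fst (ends G0 R v w (b,l1)) \<notin> E"
    have "endset G0 R v w (b, l1 @ [zv]) \<inter> E = {}"
      by (rule endset_snoc_disj[OF vw(3)]) (use p1 zv E2 in auto)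
    then show ?thesis using z1(1) zv(1) by (intro exI[of _ "[z1,zv]"]) (simp add: l1_def E_def)
  next
    assume q1: "snd (ends G0 R v w (b,l1)) \<notin> E"
    have "endset G0 R v w (b, l1 @ [zw]) \<inter> E = {}"
      by (rule endset_snoc_disj[OF vw(3)]) (use q1 zw E2 in auto)
    then show ?thesis using z1(1) zw(1) by (intro exI[of _ "[z1,zw]"]) (simp add: l1_def E_def)
  qed
qed

lemma loop_snoc:
  assumes "v \<noteq> w"
  shows "is_loop_word G0 R v w (b, l @ [z]) \<longleftrightarrow>
    (tail R z = head R z \<or> (is_loop_word G0 R v w (b,l) \<and> tail R z \<in> {v,w} \<and> head R z \<in> {v,w}))"
proof -
  have n1: "fst (ends G0 R v w (b,l)) \<noteq> Inr ((b,l),d)" "snd (ends G0 R v w (b,l)) \<noteq> Inr ((b,l),d)" for d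
    using Inr_not_endset[of b l d G0 R v w] by (auto simp: endset_def)
  show ?thesis
    unfolding is_loop_word_def ends_snoc Let_def
    using assms n1 by (auto simp: n1[symmetric])
qed

lemma loop_ext:
  assumes "v \<noteq> w" "is_loop_word G0 R v w x \<longleftrightarrow> is_loop_word G0 R v w y"
  shows "is_loop_word G0 R v w (fst x, snd x @ m) \<longleftrightarrow> is_loop_word G0 R v w (fst y, snd y @ m)"
proof (induction m rule: rev_induct)
  case Nil then show ?case using assms(2) by simp
next
  case (snoc z m)
  then show ?case
    using loop_snoc[OF assms(1), of G0 R "fst x" "snd x @ m" z] loop_snoc[OF assms(1), of G0 R "fst y" "snd y @ m" z]
    by simp
qed

lemma graft_cyl:
  assumes "s \<in> cylinder G0 R x" "edge_word G0 R m y"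
  shows "graft x y s \<in> cylinder G0 R y"
  using assms by (auto simp: cylinder_iff topspace_symbol graft_def edge_word_def)

lemma graft_ext:
  assumes "s \<in> cylinder G0 R (fst x, snd x @ m)"
  shows "graft x y s = graft (fst x, snd x @ m) (fst y, snd y @ m) s"
proof -
  have h: "snd s j = (snd x @ m) ! j" if "j < length (snd x) + length m" for j
    using assms that by (simp add: cylinder_iff)
  have "snd (graft x y s) i = snd (graft (fst x, snd x @ m) (fst y, snd y @ m) s) i" for i
  proof -
    consider "i < length (snd y)" | "length (snd y) \<le> i" "i < length (snd y) + length m"
      | "length (snd y) + length m \<le> i" by linarith
    then show ?thesis
    proof cases
      case 1 then show ?thesis by (simp add: graft_def nth_append)
    next
      case 2
      define j where "j = i - length (snd y) + length (snd x)"
      have j: "length (snd x) \<le> j" "j < length (snd x) + length m" "j - length (snd x) = i - length (snd y)"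
        using 2 by (auto simp: j_def)
      have "snd s j = m ! (j - length (snd x))"
        using h[OF j(2)] j(1) by (simp add: nth_append)
      then have "snd s (i - length (snd y) + length (snd x)) = m ! (i - length (snd y))"
        using j(3) by (simp add: j_def)
      then show ?thesis using 2 by (simp add: graft_def nth_append)
    next
      case 3
      then have "i - (length (snd y) + length m) + (length (snd x) + length m) = i - length (snd y) + length (snd x)"
        by simp
      then show ?thesis using 3 by (simp add: graft_def nth_append)
    qed
  qed
  then show ?thesis by (simp add: graft_def fun_eq_iff)
qed

lemma graft_graft: "graft y z (graft x y s) = graft x z s"
  by (auto simp: graft_def fun_eq_iff)

lemma graft_id: "s \<in> cylinder G0 R x \<Longrightarrow> graft x x s = s"
  by (cases s) (auto simp: graft_def fun_eq_iff cylinder_iff)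

lemma cyl_mono: "s \<in> cylinder G0 R (fst x, snd x @ m) \<Longrightarrow> s \<in> cylinder G0 R x"
  by (auto simp: cylinder_iff nth_append)

lemma topspace_limit: "topspace (limit_top G0 R v w) = limit_space G0 R v w"
proof -
  let ?T = "symbol_top G0 R" and ?r = "glue_rel G0 R v w"
  have op: "openin (limit_top G0 R v w) U \<longleftrightarrow> U \<subseteq> topspace ?T // ?r \<and> openin ?T {x \<in> topspace ?T. ?r `` {x} \<in> U}" for U
    unfolding limit_top_def quotient_top_def by (simp add: istopology_quotient)
  have "{x \<in> topspace ?T. ?r `` {x} \<in> topspace ?T // ?r} = topspace ?T"
    by (auto intro: quotientI)
  then have "openin (limit_top G0 R v w) (topspace ?T // ?r)" using op by simp
  then have b: "topspace ?T // ?r \<subseteq> topspace (limit_top G0 R v w)" by (rule openin_subset)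
  have a: "topspace (limit_top G0 R v w) \<subseteq> topspace ?T // ?r"
    using op[of "topspace (limit_top G0 R v w)"] by simp
  show ?thesis unfolding limit_space_def using a b by (rule subset_antisym)
qed

lemma limit_space_qmap: "limit_space G0 R v w = qmap G0 R v w ` topspace (symbol_top G0 R)"
  by (auto simp: limit_space_def quotient_def qmap_def)

lemma glue_refl: "s \<in> topspace (symbol_top G0 R) \<Longrightarrow> (s,s) \<in> glue_rel G0 R v w"
  by (auto simp: glue_rel_def incident_def)

lemma qmap_eq_glue: "qmap G0 R v w s = qmap G0 R v w t \<Longrightarrow> t \<in> topspace (symbol_top G0 R)
   \<Longrightarrow> (s,t) \<in> glue_rel G0 R v w"
  using glue_refl[of t G0 R v w] by (auto simp: qmap_def)

lemma cyl_sub: "cylinder G0 R x \<subseteq> topspace (symbol_top G0 R)"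
  by (auto simp: cylinder_def)

lemma cell_sub: "cell G0 R v w x \<subseteq> limit_space G0 R v w"
  unfolding cell_def limit_space_qmap using cyl_sub[of G0 R x] by (rule image_mono)

lemma cyl_prefix: "s \<in> cylinder G0 R x \<Longrightarrow> prefix_word (length (snd x)) s = x"
  by (simp add: cylinder_def)

lemma prefix_cyl: "s \<in> topspace (symbol_top G0 R) \<Longrightarrow> s \<in> cylinder G0 R (prefix_word n s)"
  by (simp add: cylinder_def)

lemma prefix_edge: "s \<in> topspace (symbol_top G0 R) \<Longrightarrow> edge_word G0 R n (prefix_word n s)"
  by (auto simp: edge_word_def topspace_symbol prefix_word_def)

lemma cyl_nonempty:
  assumes "edge_word G0 R n q" "z0 \<in> arcs R"
  shows "\<exists>s. s \<in> cylinder G0 R q"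
proof -
  let ?s = "(fst q, \<lambda>i. if i < n then snd q ! i else z0)"
  have "?s \<in> cylinder G0 R q" using assms
    by (auto simp: cylinder_iff topspace_symbol edge_word_def)
  then show ?thesis by blast
qed

lemma cyl_cyl_prefix:
  assumes "s \<in> cylinder G0 R x" "s \<in> cylinder G0 R q" "length (snd x) \<le> length (snd q)"
  shows "q = (fst x, snd x @ drop (length (snd x)) (snd q))"
proof -
  have "take (length (snd x)) (snd q) = snd x"
    using assms by (auto simp: cylinder_iff intro!: nth_equalityI)
  moreover have "fst q = fst x" using assms by (simp add: cylinder_iff)
  ultimately show ?thesis by (metis append_take_drop_id prod.collapse)
qed

lemma samelen_incomp: "length (snd x) = length (snd y) \<Longrightarrow> x \<noteq> y \<Longrightarrow> \<not> pre x y"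
  by (cases x, cases y) (auto simp: pre_def)

section \<open>Covering\<close>

lemma cov:
  assumes exp: "expanding G0 R v w" and fin: "finite W"
    and covr: "limit_space G0 R v w \<subseteq> (\<Union>x\<in>W. cell G0 R v w x)"
    and s: "s \<in> topspace (symbol_top G0 R)"
  shows "\<exists>x\<in>W. s \<in> cylinder G0 R x"
proof (rule ccontr)
  assume nc: "\<not> ?thesis"
  define N where "N = Max (insert 0 ((\<lambda>x. length (snd x)) ` W))"
  have leN: "length (snd x) \<le> N" if "x \<in> W" for x
    unfolding N_def using fin that by (intro Max_ge) auto
  define z where "z = prefix_word N s"
  obtain u where u: "set u \<subseteq> arcs R" "endset G0 R v w (fst z, snd z @ u) \<inter> endset G0 R v w (fst z, snd z) = {}"
    using escape[OF exp] by blast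
  define t where "t = (fst s, \<lambda>i. if i < N then snd s i else if i < N + length u then u ! (i - N) else snd s i)"
  have tS: "t \<in> topspace (symbol_top G0 R)"
    using s u(1) by (auto simp: t_def topspace_symbol)
  have tz: "prefix_word N t = z"
    by (simp add: z_def t_def prefix_word_def)
  have tzu: "prefix_word (N + length u) t = (fst z, snd z @ u)"
  proof -
    have "prefix_word (length (snd (fst z, snd z @ u))) t = (fst z, snd z @ u)"
      unfolding prefix_eq_iff by (auto simp: t_def z_def nth_append prefix_word_def)
    then show ?thesis by (simp add: z_def)
  qed
  have "qmap G0 R v w t \<in> limit_space G0 R v w" using tS by (simp add: limit_space_qmap)
  then obtain x t' where x: "x \<in> W" "t' \<in> cylinder G0 R x" "qmap G0 R v w t = qmap G0 R v w t'"
    using covr by (auto simp: cell_def)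
  have glue: "(t,t') \<in> glue_rel G0 R v w"
    using qmap_eq_glue[OF x(3)] x(2) cyl_sub by blast
  have sx: "s \<notin> cylinder G0 R x" using nc x(1) by blast
  have np1: "\<not> pre x z"
  proof
    assume "pre x z"
    then obtain m where m: "fst x = fst z" "snd z = snd x @ m" by (auto simp: pre_def)
    have "s \<in> cylinder G0 R x"
      unfolding cylinder_iff
    proof (intro conjI allI impI)
      show "s \<in> topspace (symbol_top G0 R)" by (rule s)
      show "fst s = fst x" using m by (simp add: z_def)
      fix j assume j: "j < length (snd x)"
      have "snd z ! j = snd s j" using j leN[OF x(1)] by (simp add: z_def prefix_word_def)
      then show "snd s j = snd x ! j" using m j by (simp add: nth_append)
    qed
    then show False using sx by simp
  qed
  have np2: "\<not> pre z x"
  proof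
    assume "pre z x"
    then obtain m where m: "fst z = fst x" "snd x = snd z @ m" by (auto simp: pre_def)
    then have "m = []" using leN[OF x(1)] by (simp add: z_def)
    then have "pre x z" using m by (simp add: pre_def)
    then show False using np1 by simp
  qed
  have "\<exists>a\<in>endset G0 R v w z. eventually (\<lambda>n. incident G0 R v w (prefix_word n t) a) sequentially"
    apply (rule glue_lemma[OF _ cyl_prefix[OF x(2)] np2 np1])
    using tz glue by (auto simp: z_def glue_rel_def)
  then obtain a M where a: "a \<in> endset G0 R v w z" "\<forall>n\<ge>M. incident G0 R v w (prefix_word n t) a"
    by (auto simp: eventually_sequentially)
  have o: "oldv N a" using endset_oldv[OF a(1)] by (simp add: z_def)
  have ni: "\<not> incident G0 R v w (prefix_word (N + length u) t) a"
    using u(2) a(1) tzu by (auto simp: incident_endset)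
  have "\<not> incident G0 R v w (prefix_word (max M (N + length u)) t) a"
    by (rule dc[OF o _ ni]) auto
  then show False using a(2) by simp
qed

section \<open>Depth partitions\<close>

lemma finite_depth:
  assumes "finite (arcs G0)" "finite (arcs R)"
  shows "finite {x. edge_word G0 R N x}"
proof -
  have "{x. edge_word G0 R N x} = arcs G0 \<times> {l. set l \<subseteq> arcs R \<and> length l = N}"
    by (auto simp: edge_word_def)
  then show ?thesis using assms by (simp add: finite_lists_length_eq)
qed

lemma depth_cellular:
  assumes "finite (arcs G0)" "finite (arcs R)"
  shows "cellular_partition G0 R v w {x. edge_word G0 R N x}"
  unfolding cellular_partition_def
proof (intro conjI ballI impI)
  show "finite {x. edge_word G0 R N x}" using finite_depth[OF assms] .
  show "\<exists>n. edge_word G0 R n x" if "x \<in> {x. edge_word G0 R N x}" for x using that by auto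
  show "(\<Union>x\<in>{x. edge_word G0 R N x}. cell G0 R v w x) = limit_space G0 R v w"
  proof
    show "(\<Union>x\<in>{x. edge_word G0 R N x}. cell G0 R v w x) \<subseteq> limit_space G0 R v w"
      by (intro UN_least cell_sub)
    show "limit_space G0 R v w \<subseteq> (\<Union>x\<in>{x. edge_word G0 R N x}. cell G0 R v w x)"
    proof
      fix p assume "p \<in> limit_space G0 R v w"
      then obtain s where s: "s \<in> topspace (symbol_top G0 R)" "p = qmap G0 R v w s"
        by (auto simp: limit_space_qmap)
      then have "p \<in> cell G0 R v w (prefix_word N s)"
        using prefix_cyl[OF s(1)] by (auto simp: cell_def)
      then show "p \<in> (\<Union>x\<in>{x. edge_word G0 R N x}. cell G0 R v w x)"
        using prefix_edge[OF s(1)] by blast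
    qed
  qed
  fix x y assume x: "x \<in> {x. edge_word G0 R N x}" and y: "y \<in> {x. edge_word G0 R N x}"
    and ne: "cell G0 R v w x \<noteq> cell G0 R v w y"
  have xy: "x \<noteq> y" using ne by auto
  have len: "length (snd x) = length (snd y)" using x y by (simp add: edge_word_def)
  have i1: "\<not> pre x y" using samelen_incomp[OF len xy] .
  have i2: "\<not> pre y x" using samelen_incomp[OF len[symmetric]] xy by auto
  show "cell_interior G0 R v w x \<inter> cell_interior G0 R v w y = {}"
  proof (rule ccontr)
    assume "\<not> ?thesis"
    then obtain p where p: "p \<in> cell_interior G0 R v w x" "p \<in> cell_interior G0 R v w y" by blast
    then obtain s t where st: "s \<in> cylinder G0 R x" "t \<in> cylinder G0 R y"
      "p = qmap G0 R v w s" "p = qmap G0 R v w t"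
      by (auto simp: cell_interior_def cell_def)
    have glue: "(s,t) \<in> glue_rel G0 R v w"
      using qmap_eq_glue[of G0 R v w s t] st cyl_sub[of G0 R y] by auto
    have "\<exists>a\<in>endset G0 R v w x. eventually (\<lambda>n. incident G0 R v w (prefix_word n s) a) sequentially"
      by (rule glue_lemma[OF cyl_prefix[OF st(1)] cyl_prefix[OF st(2)] i1 i2])
        (use glue in \<open>auto simp: glue_rel_def\<close>)
    then obtain a where a: "a \<in> endset G0 R v w x"
      "eventually (\<lambda>n. incident G0 R v w (prefix_word n s) a) sequentially" by blast
    have "p \<in> vertex_point G0 R v w a"
      unfolding vertex_point_def using a(2) st(1,3) cyl_sub by blast
    then have "p \<in> cell_boundary G0 R v w x"
      using a(1) by (auto simp: cell_boundary_def endset_def)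
    then show False using p(1) by (simp add: cell_interior_def)
  qed
qed

definition goodrule where
  "goodrule G0 R v w f N \<longleftrightarrow> (\<forall>q. edge_word G0 R N q \<longrightarrow>
     (\<exists>y m. edge_word G0 R m y \<and> (is_loop_word G0 R v w q \<longleftrightarrow> is_loop_word G0 R v w y) \<and>
       (\<forall>s\<in>cylinder G0 R q. f (qmap G0 R v w s) = qmap G0 R v w (graft q y s))))"

definition goodN where
  "goodN G0 R v w f N0 \<longleftrightarrow> (\<forall>N q. N0 \<le> N \<longrightarrow> edge_word G0 R N q \<longrightarrow>
     (\<exists>y m. edge_word G0 R m y \<and> N - N0 \<le> m \<and> (is_loop_word G0 R v w q \<longleftrightarrow> is_loop_word G0 R v w y) \<and>
       (\<forall>s\<in>cylinder G0 R q. f (qmap G0 R v w s) = qmap G0 R v w (graft q y s))))"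

lemma exp_facts:
  assumes "expanding G0 R v w"
  shows "v \<noteq> w" "finite (arcs G0)" "finite (arcs R)" "\<exists>z0. z0 \<in> arcs R"
proof -
  have rs: "repl_sys G0 R v w" using assms by (simp add: expanding_def)
  show "v \<noteq> w" using rs by (simp add: repl_sys_def)
  show "finite (arcs G0)" using rs by (simp add: repl_sys_def fin_digraph.finite_arcs)
  show "finite (arcs R)" using rs by (simp add: repl_sys_def fin_digraph.finite_arcs)
  have "card (arcs R) \<ge> 2" using assms by (simp add: expanding_def)
  then have "arcs R \<noteq> {}" by auto
  then show "\<exists>z0. z0 \<in> arcs R" by blast
qed

lemma refine:
  assumes vw: "v \<noteq> w" and y: "edge_word G0 R m y"
    and lp: "is_loop_word G0 R v w x \<longleftrightarrow> is_loop_word G0 R v w y"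
    and rule: "\<forall>s\<in>cylinder G0 R x. f (qmap G0 R v w s) = qmap G0 R v w (graft x y s)"
    and q: "q = (fst x, snd x @ mm)" and mm: "set mm \<subseteq> arcs R"
  shows "edge_word G0 R (m + length mm) (fst y, snd y @ mm) \<and>
     (is_loop_word G0 R v w q \<longleftrightarrow> is_loop_word G0 R v w (fst y, snd y @ mm)) \<and>
     (\<forall>s\<in>cylinder G0 R q. f (qmap G0 R v w s) = qmap G0 R v w (graft q (fst y, snd y @ mm) s))"
proof (intro conjI ballI)
  show "edge_word G0 R (m + length mm) (fst y, snd y @ mm)" using y mm by (auto simp: edge_word_def)
  show "is_loop_word G0 R v w q \<longleftrightarrow> is_loop_word G0 R v w (fst y, snd y @ mm)"
    unfolding q by (rule loop_ext[OF vw lp])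
  fix s assume s: "s \<in> cylinder G0 R q"
  have "s \<in> cylinder G0 R x" using cyl_mono s q by blast
  then have "f (qmap G0 R v w s) = qmap G0 R v w (graft x y s)" using rule by blast
  also have "graft x y s = graft q (fst y, snd y @ mm) s"
    using graft_ext[of s G0 R x mm y] s q by simp
  finally show "f (qmap G0 R v w s) = qmap G0 R v w (graft q (fst y, snd y @ mm) s)" .
qed

lemma extend:
  assumes vw: "v \<noteq> w" and g: "goodrule G0 R v w f N0"
  shows "goodN G0 R v w f N0"
  unfolding goodN_def
proof (intro allI impI)
  fix N q assume N: "N0 \<le> N" and q: "edge_word G0 R N q"
  define q0 where "q0 = (fst q, take N0 (snd q))"
  define mm where "mm = drop N0 (snd q)"
  have q0: "edge_word G0 R N0 q0" using q N
    by (auto simp: q0_def edge_word_def dest: in_set_takeD)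
  obtain y m where ym: "edge_word G0 R m y" "is_loop_word G0 R v w q0 \<longleftrightarrow> is_loop_word G0 R v w y"
     "\<forall>s\<in>cylinder G0 R q0. f (qmap G0 R v w s) = qmap G0 R v w (graft q0 y s)"
    using g q0 unfolding goodrule_def by blast
  have qe: "q = (fst q0, snd q0 @ mm)" by (simp add: q0_def mm_def)
  have mmR: "set mm \<subseteq> arcs R" using q by (auto simp: mm_def edge_word_def dest: in_set_dropD)
  have lm: "length mm = N - N0" using q by (simp add: mm_def edge_word_def)
  from refine[OF vw ym qe mmR] lm show "\<exists>y m. edge_word G0 R m y \<and> N - N0 \<le> m \<and>
      (is_loop_word G0 R v w q \<longleftrightarrow> is_loop_word G0 R v w y) \<and>
      (\<forall>s\<in>cylinder G0 R q. f (qmap G0 R v w s) = qmap G0 R v w (graft q y s))"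
    by (intro exI[of _ "(fst y, snd y @ mm)"] exI[of _ "m + length mm"]) simp
qed

lemma goodN_rule: "goodN G0 R v w f N0 \<Longrightarrow> goodrule G0 R v w f N0"
  unfolding goodN_def goodrule_def by blast

lemma suff:
  assumes "finite (arcs G0)" "finite (arcs R)"
    and "f \<in> extensional (limit_space G0 R v w)"
    and "homeomorphic_map (limit_top G0 R v w) (limit_top G0 R v w) f"
    and g: "goodrule G0 R v w f N"
  shows "rearrangement G0 R v w f"
  unfolding rearrangement_def
proof (intro conjI assms(3,4) exI[of _ "{x. edge_word G0 R N x}"] depth_cellular[OF assms(1,2)] ballI)
  fix x assume "x \<in> {x. edge_word G0 R N x}"
  then show "\<exists>y. (\<exists>m. edge_word G0 R m y) \<and> (is_loop_word G0 R v w x = is_loop_word G0 R v w y) \<and>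
        (\<forall>s\<in>cylinder G0 R x. f (qmap G0 R v w s) = qmap G0 R v w (graft x y s))"
    using g unfolding goodrule_def by blast
qed

lemma deep:
  assumes exp: "expanding G0 R v w" and r: "rearrangement G0 R v w f"
  shows "\<exists>N0. goodrule G0 R v w f N0"
proof -
  note ef = exp_facts[OF exp]
  obtain z0 where z0: "z0 \<in> arcs R" using ef(4) by blast
  obtain P where P: "cellular_partition G0 R v w P"
    and Pr: "\<forall>x\<in>P. \<exists>y. (\<exists>m. edge_word G0 R m y) \<and> (is_loop_word G0 R v w x \<longleftrightarrow> is_loop_word G0 R v w y) \<and>
              (\<forall>s\<in>cylinder G0 R x. f (qmap G0 R v w s) = qmap G0 R v w (graft x y s))"
    using r unfolding rearrangement_def by blast
  have finP: "finite P" and covP: "limit_space G0 R v w \<subseteq> (\<Union>x\<in>P. cell G0 R v w x)"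
    using P unfolding cellular_partition_def by auto
  define N0 where "N0 = Max (insert 0 ((\<lambda>x. length (snd x)) ` P))"
  have leN: "length (snd x) \<le> N0" if "x \<in> P" for x
    unfolding N0_def using finP that by (intro Max_ge) auto
  have "goodrule G0 R v w f N0"
    unfolding goodrule_def
  proof (intro allI impI)
    fix q assume q: "edge_word G0 R N0 q"
    obtain s where s: "s \<in> cylinder G0 R q" using cyl_nonempty[OF q z0] by blast
    obtain x where x: "x \<in> P" "s \<in> cylinder G0 R x"
      using cov[OF exp finP covP] s cyl_sub by blast
    have lq: "length (snd q) = N0" using q by (simp add: edge_word_def)
    define mm where "mm = drop (length (snd x)) (snd q)"
    have qe: "q = (fst x, snd x @ mm)"
      unfolding mm_def by (rule cyl_cyl_prefix[OF x(2) s]) (use leN[OF x(1)] lq in simp)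
    have mmR: "set mm \<subseteq> arcs R" using q by (auto simp: mm_def edge_word_def dest: in_set_dropD)
    obtain y m where ym: "edge_word G0 R m y" "is_loop_word G0 R v w x \<longleftrightarrow> is_loop_word G0 R v w y"
      "\<forall>s\<in>cylinder G0 R x. f (qmap G0 R v w s) = qmap G0 R v w (graft x y s)"
      using Pr x(1) by blast
    from refine[OF ef(1) ym qe mmR]
    show "\<exists>y m. edge_word G0 R m y \<and> (is_loop_word G0 R v w q \<longleftrightarrow> is_loop_word G0 R v w y) \<and>
       (\<forall>s\<in>cylinder G0 R q. f (qmap G0 R v w s) = qmap G0 R v w (graft q y s))"
      by blast
  qed
  then show ?thesis by blast
qed

lemma comp_good:
  assumes f: "goodN G0 R v w f N1" and g: "goodN G0 R v w g N2"
    and fX: "f ` limit_space G0 R v w \<subseteq> limit_space G0 R v w"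
  shows "goodN G0 R v w (compose (limit_space G0 R v w) g f) (N1 + N2)"
  unfolding goodN_def
proof (intro allI impI)
  fix N q assume N: "N1 + N2 \<le> N" and q: "edge_word G0 R N q"
  obtain y m where ym: "edge_word G0 R m y" "N - N1 \<le> m" "is_loop_word G0 R v w q \<longleftrightarrow> is_loop_word G0 R v w y"
     "\<forall>s\<in>cylinder G0 R q. f (qmap G0 R v w s) = qmap G0 R v w (graft q y s)"
    using f q N unfolding goodN_def by (metis le_add1 order_trans)
  have "N2 \<le> m" using ym(2) N by linarith
  then obtain y' m' where ym': "edge_word G0 R m' y'" "m - N2 \<le> m'" "is_loop_word G0 R v w y \<longleftrightarrow> is_loop_word G0 R v w y'"
     "\<forall>s\<in>cylinder G0 R y. g (qmap G0 R v w s) = qmap G0 R v w (graft y y' s)"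
    using g ym(1) unfolding goodN_def by blast
  show "\<exists>y m. edge_word G0 R m y \<and> N - (N1 + N2) \<le> m \<and>
      (is_loop_word G0 R v w q \<longleftrightarrow> is_loop_word G0 R v w y) \<and>
      (\<forall>s\<in>cylinder G0 R q. compose (limit_space G0 R v w) g f (qmap G0 R v w s) = qmap G0 R v w (graft q y s))"
  proof (intro exI[of _ y'] exI[of _ m'] conjI ballI)
    show "edge_word G0 R m' y'" by (rule ym'(1))
    show "N - (N1 + N2) \<le> m'" using ym(2) ym'(2) by linarith
    show "is_loop_word G0 R v w q \<longleftrightarrow> is_loop_word G0 R v w y'" using ym(3) ym'(3) by simp
    fix s assume s: "s \<in> cylinder G0 R q"
    have sX: "qmap G0 R v w s \<in> limit_space G0 R v w"
      using s cyl_sub[of G0 R q] by (auto simp: limit_space_qmap)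
    have gs: "graft q y s \<in> cylinder G0 R y" by (rule graft_cyl[OF s ym(1)])
    have "compose (limit_space G0 R v w) g f (qmap G0 R v w s) = g (f (qmap G0 R v w s))"
      using sX by (simp add: compose_eq)
    also have "\<dots> = g (qmap G0 R v w (graft q y s))" using ym(4) s by simp
    also have "\<dots> = qmap G0 R v w (graft y y' (graft q y s))" using ym'(4) gs by simp
    also have "\<dots> = qmap G0 R v w (graft q y' s)" by (simp add: graft_graft)
    finally show "compose (limit_space G0 R v w) g f (qmap G0 R v w s) = qmap G0 R v w (graft q y' s)" .
  qed
qed

lemma qmap_in: "s \<in> cylinder G0 R q \<Longrightarrow> qmap G0 R v w s \<in> limit_space G0 R v w"
  using cyl_sub[of G0 R q] by (auto simp: limit_space_qmap)

lemma inv_good: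
  assumes exp: "expanding G0 R v w" and r: "rearrangement G0 R v w f"
  shows "\<exists>M. goodrule G0 R v w (restrict (inv_into (limit_space G0 R v w) f) (limit_space G0 R v w)) M"
proof -
  let ?X = "limit_space G0 R v w" and ?L = "limit_top G0 R v w"
  let ?g = "restrict (inv_into ?X f) ?X"
  let ?q = "qmap G0 R v w"
  note ef = exp_facts[OF exp]
  obtain z0 where z0: "z0 \<in> arcs R" using ef(4) by blast
  have hom: "homeomorphic_map ?L ?L f" using r by (simp add: rearrangement_def)
  have fX: "f ` ?X = ?X" using homeomorphic_imp_surjective_map[OF hom] by (simp add: topspace_limit)
  have inj: "inj_on f ?X" using homeomorphic_imp_injective_map[OF hom] by (simp add: topspace_limit)
  obtain N0 where gr: "goodrule G0 R v w f N0" using deep[OF exp r] by blast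
  define Q0 where "Q0 = {q. edge_word G0 R N0 q}"
  have finQ: "finite Q0" unfolding Q0_def using finite_depth[OF ef(2,3)] .
  define Pr where "Pr = (\<lambda>q y. (\<exists>m. edge_word G0 R m y) \<and> (is_loop_word G0 R v w q \<longleftrightarrow> is_loop_word G0 R v w y) \<and>
       (\<forall>s\<in>cylinder G0 R q. f (?q s) = ?q (graft q y s)))"
  define Y where "Y = (\<lambda>q. SOME y. Pr q y)"
  have Yp: "Pr q (Y q)" if "q \<in> Q0" for q
  proof -
    have "\<exists>y. Pr q y" using gr that unfolding goodrule_def Q0_def Pr_def by blast
    then show ?thesis unfolding Y_def by (rule someI_ex)
  qed
  have covY: "?X \<subseteq> (\<Union>x\<in>Y ` Q0. cell G0 R v w x)"
  proof
    fix p assume "p \<in> ?X"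
    then obtain p' where p': "p' \<in> ?X" "p = f p'" using fX by blast
    then obtain s where s: "s \<in> topspace (symbol_top G0 R)" "p' = ?q s" by (auto simp: limit_space_qmap)
    define q where "q = prefix_word N0 s"
    have q: "q \<in> Q0" "s \<in> cylinder G0 R q" using prefix_edge[OF s(1)] prefix_cyl[OF s(1)]
      by (auto simp: Q0_def q_def)
    have pp: "Pr q (Y q)" by (rule Yp[OF q(1)])
    then obtain m where m: "edge_word G0 R m (Y q)" unfolding Pr_def by blast
    have "p = ?q (graft q (Y q) s)" using pp q(2) p'(2) s(2) unfolding Pr_def by simp
    moreover have "graft q (Y q) s \<in> cylinder G0 R (Y q)" by (rule graft_cyl[OF q(2) m])
    ultimately have "p \<in> cell G0 R v w (Y q)" by (auto simp: cell_def)
    then show "p \<in> (\<Union>x\<in>Y ` Q0. cell G0 R v w x)" using q(1) by blast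
  qed
  have finY: "finite (Y ` Q0)" using finQ by simp
  define M where "M = Max (insert 0 ((\<lambda>x. length (snd x)) ` Y ` Q0))"
  have leM: "length (snd x) \<le> M" if "x \<in> Y ` Q0" for x
    unfolding M_def using finY that by (intro Max_ge) auto
  have "goodrule G0 R v w ?g M"
    unfolding goodrule_def
  proof (intro allI impI)
    fix r assume r: "edge_word G0 R M r"
    obtain t0 where t0: "t0 \<in> cylinder G0 R r" using cyl_nonempty[OF r z0] by blast
    obtain q where q: "q \<in> Q0" "t0 \<in> cylinder G0 R (Y q)"
      using cov[OF exp finY covY, of t0] t0 cyl_sub[of G0 R r] by blast
    have pp: "Pr q (Y q)" by (rule Yp[OF q(1)])
    have lr: "length (snd r) = M" using r by (simp add: edge_word_def)
    define mm where "mm = drop (length (snd (Y q))) (snd r)"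
    have re: "r = (fst (Y q), snd (Y q) @ mm)"
      unfolding mm_def by (rule cyl_cyl_prefix[OF q(2) t0]) (use leM q(1) lr in simp)
    have mmR: "set mm \<subseteq> arcs R" using r by (auto simp: mm_def edge_word_def dest: in_set_dropD)
    define z where "z = (fst q, snd q @ mm)"
    have qe: "edge_word G0 R N0 q" using q(1) by (simp add: Q0_def)
    have ze: "edge_word G0 R (N0 + length mm) z" using qe mmR by (auto simp: z_def edge_word_def)
    have lpq: "is_loop_word G0 R v w (Y q) \<longleftrightarrow> is_loop_word G0 R v w q" using pp unfolding Pr_def by simp
    have lp: "is_loop_word G0 R v w r \<longleftrightarrow> is_loop_word G0 R v w z"
      unfolding re z_def by (rule loop_ext[OF ef(1) lpq])
    have rule: "?g (?q t) = ?q (graft r z t)" if t: "t \<in> cylinder G0 R r" for t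
    proof -
      define s where "s = graft r z t"
      have sz: "s \<in> cylinder G0 R z" unfolding s_def by (rule graft_cyl[OF t ze])
      have sq: "s \<in> cylinder G0 R q" using cyl_mono sz z_def by blast
      have "f (?q s) = ?q (graft q (Y q) s)" using pp sq unfolding Pr_def by blast
      also have "graft q (Y q) s = graft z r s"
        using graft_ext[of s G0 R q mm "Y q"] sz re z_def by simp
      also have "graft z r s = t" unfolding s_def graft_graft using graft_id[OF t] .
      finally have fs: "f (?q s) = ?q t" .
      have sX: "?q s \<in> ?X" by (rule qmap_in[OF sz])
      have tX: "?q t \<in> ?X" by (rule qmap_in[OF t])
      have "?g (?q t) = inv_into ?X f (f (?q s))" using tX fs by simp
      also have "\<dots> = ?q s" using inv_into_f_f[OF inj sX] .
      finally show ?thesis by (simp add: s_def)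
    qed
    show "\<exists>y m. edge_word G0 R m y \<and> (is_loop_word G0 R v w r \<longleftrightarrow> is_loop_word G0 R v w y) \<and>
       (\<forall>s\<in>cylinder G0 R r. ?g (?q s) = ?q (graft r y s))"
      using ze lp rule by blast
  qed
  then show ?thesis by blast
qed

lemma comp_rearr:
  assumes exp: "expanding G0 R v w" and f: "rearrangement G0 R v w f" and g: "rearrangement G0 R v w g"
  shows "rearrangement G0 R v w (compose (limit_space G0 R v w) g f)"
proof -
  note ef = exp_facts[OF exp]
  let ?X = "limit_space G0 R v w" and ?L = "limit_top G0 R v w"
  have hf: "homeomorphic_map ?L ?L f" using f by (simp add: rearrangement_def)
  have hg: "homeomorphic_map ?L ?L g" using g by (simp add: rearrangement_def)
  have fX: "f ` ?X \<subseteq> ?X" using homeomorphic_imp_surjective_map[OF hf] by (simp add: topspace_limit)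
  obtain N1 where n1: "goodrule G0 R v w f N1" using deep[OF exp f] by blast
  obtain N2 where n2: "goodrule G0 R v w g N2" using deep[OF exp g] by blast
  have gc: "goodN G0 R v w (compose ?X g f) (N1 + N2)"
    by (rule comp_good[OF extend[OF ef(1) n1] extend[OF ef(1) n2] fX])
  have h: "homeomorphic_map ?L ?L (compose ?X g f)"
    by (rule homeomorphic_map_eq[OF homeomorphic_map_compose[OF hf hg]])
       (simp add: topspace_limit compose_eq)
  show ?thesis
    by (rule suff[OF ef(2,3) compose_extensional h goodN_rule[OF gc]])
qed

lemma id_rearr:
  assumes exp: "expanding G0 R v w"
  shows "rearrangement G0 R v w (\<lambda>p\<in>limit_space G0 R v w. p)"
proof -
  note ef = exp_facts[OF exp]
  let ?X = "limit_space G0 R v w" and ?L = "limit_top G0 R v w"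
  have h: "homeomorphic_map ?L ?L (\<lambda>p\<in>?X. p)"
    by (rule homeomorphic_map_eq[of _ _ id]) (simp_all add: topspace_limit)
  have "goodrule G0 R v w (\<lambda>p\<in>?X. p) 0"
    unfolding goodrule_def
  proof (intro allI impI)
    fix q assume q: "edge_word G0 R 0 q"
    show "\<exists>y m. edge_word G0 R m y \<and> (is_loop_word G0 R v w q \<longleftrightarrow> is_loop_word G0 R v w y) \<and>
       (\<forall>s\<in>cylinder G0 R q. (\<lambda>p\<in>?X. p) (qmap G0 R v w s) = qmap G0 R v w (graft q y s))"
      using q qmap_in[of _ G0 R q v w] graft_id[of _ G0 R q]
      by (intro exI[of _ q] exI[of _ 0]) auto
  qed
  then show ?thesis by (rule suff[OF ef(2,3) restrict_extensional h])
qed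

lemma inv_rearr:
  assumes exp: "expanding G0 R v w" and f: "rearrangement G0 R v w f"
  shows "rearrangement G0 R v w (restrict (inv_into (limit_space G0 R v w) f) (limit_space G0 R v w))"
    and "compose (limit_space G0 R v w) (restrict (inv_into (limit_space G0 R v w) f) (limit_space G0 R v w)) f
          = (\<lambda>p\<in>limit_space G0 R v w. p)"
proof -
  note ef = exp_facts[OF exp]
  let ?X = "limit_space G0 R v w" and ?L = "limit_top G0 R v w"
  let ?g = "restrict (inv_into ?X f) ?X"
  have hf: "homeomorphic_map ?L ?L f" using f by (simp add: rearrangement_def)
  have fX: "f ` ?X = ?X" using homeomorphic_imp_surjective_map[OF hf] by (simp add: topspace_limit)
  have inj: "inj_on f ?X" using homeomorphic_imp_injective_map[OF hf] by (simp add: topspace_limit)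
  obtain g' where g': "homeomorphic_maps ?L ?L f g'" using hf homeomorphic_map_maps by blast
  have hg': "homeomorphic_map ?L ?L g'" and gf: "\<forall>y\<in>topspace ?L. f (g' y) = y"
    using g'[unfolded homeomorphic_maps_map] by simp_all
  have g'X: "g' y \<in> ?X" if "y \<in> ?X" for y
    using homeomorphic_imp_surjective_map[OF hg'] that by (auto simp: topspace_limit)
  have h: "homeomorphic_map ?L ?L ?g"
  proof (rule homeomorphic_map_eq[OF hg'])
    fix y assume y: "y \<in> topspace ?L"
    then have yX: "y \<in> ?X" by (simp add: topspace_limit)
    have "inv_into ?X f y = g' y"
      by (rule inv_into_f_eq[OF inj g'X[OF yX]]) (use gf y in simp)
    then show "g' y = ?g y" using yX by simp
  qed
  obtain M where M: "goodrule G0 R v w ?g M" using inv_good[OF exp f] by blast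
  show "rearrangement G0 R v w ?g"
    by (rule suff[OF ef(2,3) restrict_extensional h M])
  show "compose ?X ?g f = (\<lambda>p\<in>?X. p)"
  proof
    fix p show "compose ?X ?g f p = (\<lambda>p\<in>?X. p) p"
      using fX inj by (cases "p \<in> ?X") (auto simp: compose_def inv_into_f_f)
  qed
qed

theorem proposition1p15:
  fixes G0 :: "('a,'b) pre_digraph" and R :: "('c,'d) pre_digraph" and v w :: 'c
  assumes "expanding G0 R v w"
  shows "group \<lparr>carrier = rearrangements G0 R v w,
                monoid.mult = compose (limit_space G0 R v w),
                one = (\<lambda>p\<in>limit_space G0 R v w. p)\<rparr>"
proof (rule groupI)
  let ?X = "limit_space G0 R v w" and ?L = "limit_top G0 R v w"
  have maps: "f \<in> ?X \<rightarrow> ?X" if "rearrangement G0 R v w f" for f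
  proof -
    have "homeomorphic_map ?L ?L f" using that by (simp add: rearrangement_def)
    from homeomorphic_imp_surjective_map[OF this] show ?thesis by (auto simp: topspace_limit)
  qed
  show "\<And>x y. x \<in> carrier \<lparr>carrier = rearrangements G0 R v w, monoid.mult = compose ?X, one = \<lambda>p\<in>?X. p\<rparr> \<Longrightarrow>
          y \<in> carrier \<lparr>carrier = rearrangements G0 R v w, monoid.mult = compose ?X, one = \<lambda>p\<in>?X. p\<rparr> \<Longrightarrow>
          x \<otimes>\<^bsub>\<lparr>carrier = rearrangements G0 R v w, monoid.mult = compose ?X, one = \<lambda>p\<in>?X. p\<rparr>\<^esub> y
            \<in> carrier \<lparr>carrier = rearrangements G0 R v w, monoid.mult = compose ?X, one = \<lambda>p\<in>?X. p\<rparr>"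
    using comp_rearr[OF assms] by (simp add: rearrangements_def)
  show "\<one>\<^bsub>\<lparr>carrier = rearrangements G0 R v w, monoid.mult = compose ?X, one = \<lambda>p\<in>?X. p\<rparr>\<^esub>
      \<in> carrier \<lparr>carrier = rearrangements G0 R v w, monoid.mult = compose ?X, one = \<lambda>p\<in>?X. p\<rparr>"
    using id_rearr[OF assms] by (simp add: rearrangements_def)
  show "\<And>x y z. x \<in> carrier \<lparr>carrier = rearrangements G0 R v w, monoid.mult = compose ?X, one = \<lambda>p\<in>?X. p\<rparr> \<Longrightarrow>
          y \<in> carrier \<lparr>carrier = rearrangements G0 R v w, monoid.mult = compose ?X, one = \<lambda>p\<in>?X. p\<rparr> \<Longrightarrow>
          z \<in> carrier \<lparr>carrier = rearrangements G0 R v w, monoid.mult = compose ?X, one = \<lambda>p\<in>?X. p\<rparr> \<Longrightarrow>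
          x \<otimes>\<^bsub>\<lparr>carrier = rearrangements G0 R v w, monoid.mult = compose ?X, one = \<lambda>p\<in>?X. p\<rparr>\<^esub> y
            \<otimes>\<^bsub>\<lparr>carrier = rearrangements G0 R v w, monoid.mult = compose ?X, one = \<lambda>p\<in>?X. p\<rparr>\<^esub> z =
          x \<otimes>\<^bsub>\<lparr>carrier = rearrangements G0 R v w, monoid.mult = compose ?X, one = \<lambda>p\<in>?X. p\<rparr>\<^esub>
            (y \<otimes>\<^bsub>\<lparr>carrier = rearrangements G0 R v w, monoid.mult = compose ?X, one = \<lambda>p\<in>?X. p\<rparr>\<^esub> z)"
    using maps by (simp add: rearrangements_def) (metis compose_assoc)
  show "\<And>x. x \<in> carrier \<lparr>carrier = rearrangements G0 R v w, monoid.mult = compose ?X, one = \<lambda>p\<in>?X. p\<rparr> \<Longrightarrow>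
          \<one>\<^bsub>\<lparr>carrier = rearrangements G0 R v w, monoid.mult = compose ?X, one = \<lambda>p\<in>?X. p\<rparr>\<^esub>
            \<otimes>\<^bsub>\<lparr>carrier = rearrangements G0 R v w, monoid.mult = compose ?X, one = \<lambda>p\<in>?X. p\<rparr>\<^esub> x = x"
  proof -
    fix x assume "x \<in> carrier \<lparr>carrier = rearrangements G0 R v w, monoid.mult = compose ?X, one = \<lambda>p\<in>?X. p\<rparr>"
    then have x: "rearrangement G0 R v w x" by (simp add: rearrangements_def)
    then have xe: "x \<in> extensional ?X" and xm: "x \<in> ?X \<rightarrow> ?X" using maps by (auto simp: rearrangement_def)
    have "compose ?X (\<lambda>p\<in>?X. p) x = x"
    proof
      fix p show "compose ?X (\<lambda>p\<in>?X. p) x p = x p"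
        using xe xm by (cases "p \<in> ?X") (auto simp: compose_def extensional_def)
    qed
    then show "\<one>\<^bsub>\<lparr>carrier = rearrangements G0 R v w, monoid.mult = compose ?X, one = \<lambda>p\<in>?X. p\<rparr>\<^esub>
            \<otimes>\<^bsub>\<lparr>carrier = rearrangements G0 R v w, monoid.mult = compose ?X, one = \<lambda>p\<in>?X. p\<rparr>\<^esub> x = x"
      by simp
  qed
  show "\<And>x. x \<in> carrier \<lparr>carrier = rearrangements G0 R v w, monoid.mult = compose ?X, one = \<lambda>p\<in>?X. p\<rparr> \<Longrightarrow>
          \<exists>y\<in>carrier \<lparr>carrier = rearrangements G0 R v w, monoid.mult = compose ?X, one = \<lambda>p\<in>?X. p\<rparr>.
            y \<otimes>\<^bsub>\<lparr>carrier = rearrangements G0 R v w, monoid.mult = compose ?X, one = \<lambda>p\<in>?X. p\<rparr>\<^esub> x =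
            \<one>\<^bsub>\<lparr>carrier = rearrangements G0 R v w, monoid.mult = compose ?X, one = \<lambda>p\<in>?X. p\<rparr>\<^esub>"
    using inv_rearr[OF assms] by (auto simp: rearrangements_def)
qed

end
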